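(* Let $E$ be a real Banach space, $K\subset E$ nonempty closed convex, $Y$ a real Banach space containing a closed, convex, pointed cone $C$ with nonempty interior, $f:E\times E\to Y$, $T:K\to\mathcal P(K)$, and $g\in\mathcal F$ satisfying H1–H4, with B1–B4 holding. Suppose $\{x^k\}$, $\{v^k\}$ and $\{w^k\}$ are the (infinite) sequences generated by Algorithm SEML. If these sequences are bounded, then $$\lim_{k\to\infty}\|v^{k+1}-v^k\|=\lim_{k\to\infty}\|v^k-x^k\|=\lim_{k\to\infty}\|x^k-w^k\|=0.$$
   Context: $C^+=\{z\in Y^*:\langle y,z\rangle\ge0\ \forall y\in C\}$; $y\preceq y'$ iff $y'-y\in C$; $C$-convex: $G(tx+(1-t)y)\preceq tG(x)+(1-t)G(y)$. $\mathcal F$: functions $g:E\to\mathbb R$ strictly convex, lower semicontinuous, Gâteaux differentiable with derivative $g'$. $D_g(x,y)=g(x)-g(y)-\langle x-y,g'(y)\rangle$; $v_g(x,t)=\inf\{D_g(y,x):\|y-x\|=t\}$. H1: level sets of $D_g(x,\cdot)$ bounded; H2: $\inf_{x\in A}v_g(x,t)>0$ for $t>0$, bounded $A$; H3: $g'$ uniformly continuous on bounded sets; H4: $\lim_{\|x\|\to\infty}(g(x)-\rho\|x-z\|)=\infty$ for all $z$, $\rho>0$. $\Pi^g_D(x)$: unique minimizer of $D_g(\cdot,x)$ over nonempty closed convex $D$. B1: $f(x,x)=0$. B2: $f$ uniformly continuous on bounded subsets of $E\times E$. B3: $f(x,\cdot)$ $C$-convex. B4: $T$ has nonempty closed convex values,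 is demiclosed ($x^k\rightharpoonup\bar x$, $d(x^k,T(x^k))\to0\Rightarrow\bar x\in T(\bar x)$), lower semicontinuous at each $\bar x\in K$ ($x^k\to\bar x$, $\bar y\in T(\bar x)\Rightarrow\exists y^k\in T(x^k)$, $y^k\to\bar y$), quasi $D_g$-nonexpansive ($S(x)=\Pi^g_{T(x)}(x)$ has a fixed point and $D_g(p,S(x))\le D_g(p,x)$ for all fixed points $p$ of $S$ and $x\in K$). $\mathrm{argmin}^C_w\{G(y):y\in Q\}$: $a\in Q$ with no $y\in Q$ such that $G(a)-G(y)\in\mathrm{int}(C)$. Algorithm SEML: parameters $v^0\in K$, $\delta,\theta\in(0,1)$, $\{\beta_k\}\subset[\hat\beta,\tilde\beta]$ with $0<\hat\beta\le\tilde\beta$, $\{\gamma_k\}\subset[\varepsilon,1]$, $\varepsilon\in(0,1]$, $\{e^k\}\subset\mathrm{int}(C)$, $e^k\to\bar e\in\mathrm{int}(C)$. Given $v^k$: $x^k=\Pi^g_{T(v^k)}(v^k)$; $z^k\in\mathrm{argmin}^C_w\{\beta_kf(x^k,y)+g(y)e^k-\langle y,g'(x^k)\rangle e^k:y\in T(v^k)\}$; stop if $z^k=v^k$; else $\ell(k)=\min\{\ell\ge0:-\beta_kf(y^\ell,x^k)+\beta_kf(y^\ell,z^k)+\delta D_g(z^k,x^k)e^k\notin\mathrm{int}(C)\}$, $y^\ell=\theta^\ell z^k+(1-\theta^\ell)x^k$; $\alpha_k=\theta^{\ell(k)}$; $y^k=\alpha_kz^k+(1-\alpha_k)x^k$;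 $H_k=\{y:f(y^k,y)\in-C\}$; $K_0=K\cap H_0$, $K_k=K_{k-1}\cap H_k$; $w^k=\Pi^g_{K_k}(x^k)$; $v^{k+1}=\Pi^g_{L_k\cap M_k\cap N_k}(v^0)$ with $L_k=\{z:\langle z-x^k,g'(x^k)-g'(w^k)\rangle\le-\gamma_kD_g(x^k,w^k)\}$, $M_k=\{z:\langle z-v^k,g'(v^k)-g'(x^k)\rangle\le-\gamma_kD_g(v^k,x^k)\}$, $N_k=\{z:\langle z-v^k,g'(v^0)-g'(v^k)\rangle\le0\}$. *)

theory Defs
  imports "HOL-Analysis.Analysis"
begin

definition strictly_convex :: "('a::real_vector \<Rightarrow> real) \<Rightarrow> bool" where
  "strictly_convex g \<longleftrightarrow>
     (\<forall>x y t. x \<noteq> y \<longrightarrow> 0 < t \<longrightarrow> t < 1 \<longrightarrow>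
        g (t *\<^sub>R x + (1 - t) *\<^sub>R y) < t * g x + (1 - t) * g y)"

definition lsc :: "('a::topological_space \<Rightarrow> real) \<Rightarrow> bool" where
  "lsc g \<longleftrightarrow> (\<forall>x c. c < g x \<longrightarrow> eventually (\<lambda>y. c < g y) (at x))"

definition gateaux_deriv :: "('a::real_normed_vector \<Rightarrow> real) \<Rightarrow> ('a \<Rightarrow> ('a \<Rightarrow>\<^sub>L real)) \<Rightarrow> bool" where
  "gateaux_deriv g g' \<longleftrightarrow>
     (\<forall>x v. ((\<lambda>t. g (x + t *\<^sub>R v)) has_field_derivative blinfun_apply (g' x) v) (at 0))"

definition in_F :: "('a::real_normed_vector \<Rightarrow> real) \<Rightarrow> ('a \<Rightarrow> ('a \<Rightarrow>\<^sub>L real)) \<Rightarrow> bool" where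
  "in_F g g' \<longleftrightarrow> strictly_convex g \<and> lsc g \<and> gateaux_deriv g g'"

definition Dg :: "('a::real_normed_vector \<Rightarrow> real) \<Rightarrow> ('a \<Rightarrow> ('a \<Rightarrow>\<^sub>L real)) \<Rightarrow> 'a \<Rightarrow> 'a \<Rightarrow> real" where
  "Dg g g' x y = g x - g y - blinfun_apply (g' y) (x - y)"

(* modulus of total convexity v_g(x,t), infimum in the extended reals (inf {} = +\<infinity>) *)
definition vg :: "('a::real_normed_vector \<Rightarrow> real) \<Rightarrow> ('a \<Rightarrow> ('a \<Rightarrow>\<^sub>L real)) \<Rightarrow> 'a \<Rightarrow> real \<Rightarrow> ereal" where
  "vg g g' x t = (INF y \<in> {y. norm (y - x) = t}. ereal (Dg g g' y x))"

definition H1 :: "('a::real_normed_vector \<Rightarrow> real) \<Rightarrow> ('a \<Rightarrow> ('a \<Rightarrow>\<^sub>L real)) \<Rightarrow> bool" where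
  "H1 g g' \<longleftrightarrow> (\<forall>x r. bounded {y. Dg g g' x y \<le> r})"

definition H2 :: "('a::real_normed_vector \<Rightarrow> real) \<Rightarrow> ('a \<Rightarrow> ('a \<Rightarrow>\<^sub>L real)) \<Rightarrow> bool" where
  "H2 g g' \<longleftrightarrow> (\<forall>A t. bounded A \<longrightarrow> t > 0 \<longrightarrow> (INF x \<in> A. vg g g' x t) > 0)"

definition H3 :: "('a::real_normed_vector \<Rightarrow> ('a \<Rightarrow>\<^sub>L real)) \<Rightarrow> bool" where
  "H3 g' \<longleftrightarrow> (\<forall>S. bounded S \<longrightarrow> uniformly_continuous_on S g')"

definition H4 :: "('a::real_normed_vector \<Rightarrow> real) \<Rightarrow> bool" where
  "H4 g \<longleftrightarrow> (\<forall>z \<rho>. \<rho> > 0 \<longrightarrow> filterlim (\<lambda>x. g x - \<rho> * norm (x - z)) at_top at_infinity)"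

definition is_bproj :: "('a::real_normed_vector \<Rightarrow> real) \<Rightarrow> ('a \<Rightarrow> ('a \<Rightarrow>\<^sub>L real)) \<Rightarrow> 'a set \<Rightarrow> 'a \<Rightarrow> 'a \<Rightarrow> bool" where
  "is_bproj g g' D x p \<longleftrightarrow> p \<in> D \<and> (\<forall>y \<in> D. Dg g g' p x \<le> Dg g g' y x)"

definition weak_conv :: "(nat \<Rightarrow> 'a::real_normed_vector) \<Rightarrow> 'a \<Rightarrow> bool" where
  "weak_conv xs x \<longleftrightarrow> (\<forall>\<phi> :: 'a \<Rightarrow>\<^sub>L real. (\<lambda>k. blinfun_apply \<phi> (xs k)) \<longlonglongrightarrow> blinfun_apply \<phi> x)"

definition good_cone :: "'b::real_normed_vector set \<Rightarrow> bool" where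
  "good_cone C \<longleftrightarrow> closed C \<and> convex C \<and> cone C \<and> C \<inter> uminus ` C = {0} \<and> interior C \<noteq> {}"

definition wargmin :: "'b::real_normed_vector set \<Rightarrow> ('a \<Rightarrow> 'b) \<Rightarrow> 'a set \<Rightarrow> 'a \<Rightarrow> bool" where
  "wargmin C G Q a \<longleftrightarrow> a \<in> Q \<and> \<not> (\<exists>y \<in> Q. G a - G y \<in> interior C)"

definition B1 :: "('a \<Rightarrow> 'a \<Rightarrow> 'b::real_normed_vector) \<Rightarrow> bool" where
  "B1 f \<longleftrightarrow> (\<forall>x. f x x = 0)"

definition B2 :: "('a::real_normed_vector \<Rightarrow> 'a \<Rightarrow> 'b::real_normed_vector) \<Rightarrow> bool" where
  "B2 f \<longleftrightarrow> (\<forall>S :: ('a \<times> 'a) set. bounded S \<longrightarrow> uniformly_continuous_on S (\<lambda>(x, y). f x y))"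

definition B3 :: "'b::real_normed_vector set \<Rightarrow> ('a::real_vector \<Rightarrow> 'a \<Rightarrow> 'b) \<Rightarrow> bool" where
  "B3 C f \<longleftrightarrow> (\<forall>x u w t. 0 \<le> t \<longrightarrow> t \<le> 1 \<longrightarrow>
      (t *\<^sub>R f x u + (1 - t) *\<^sub>R f x w) - f x (t *\<^sub>R u + (1 - t) *\<^sub>R w) \<in> C)"

definition B4 :: "('a::real_normed_vector \<Rightarrow> real) \<Rightarrow> ('a \<Rightarrow> ('a \<Rightarrow>\<^sub>L real)) \<Rightarrow> 'a set \<Rightarrow> ('a \<Rightarrow> 'a set) \<Rightarrow> bool" where
  "B4 g g' K T \<longleftrightarrow>
     (\<forall>x \<in> K. T x \<noteq> {} \<and> closed (T x) \<and> convex (T x))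
     \<and> (\<forall>xs xb. (\<forall>k. xs k \<in> K) \<longrightarrow> xb \<in> K \<longrightarrow> weak_conv xs xb \<longrightarrow>
           (\<lambda>k. infdist (xs k) (T (xs k))) \<longlonglongrightarrow> 0 \<longrightarrow> xb \<in> T xb)
     \<and> (\<forall>xb \<in> K. \<forall>xs yb. (\<forall>k. xs k \<in> K) \<longrightarrow> xs \<longlonglongrightarrow> xb \<longrightarrow> yb \<in> T xb \<longrightarrow>
           (\<exists>ys. (\<forall>k. ys k \<in> T (xs k)) \<and> ys \<longlonglongrightarrow> yb))
     \<and> (\<exists>p \<in> K. is_bproj g g' (T p) p p)
     \<and> (\<forall>p \<in> K. is_bproj g g' (T p) p p \<longrightarrow>
           (\<forall>x \<in> K. \<forall>s. is_bproj g g' (T x) x s \<longrightarrow> Dg g g' p s \<le> Dg g g' p x))"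

end

theory Submission
  imports Defs
begin

lemma sc_conv:
  fixes g :: "'a::real_vector \<Rightarrow> real"
  assumes "strictly_convex g" "0 \<le> t" "t \<le> 1"
  shows "g (t *\<^sub>R x + (1 - t) *\<^sub>R y) \<le> t * g x + (1 - t) * g y"
proof (cases "x = y \<or> t = 0 \<or> t = 1")
  case True
  then show ?thesis
  proof (elim disjE)
    assume "x = y" then show ?thesis by (simp add: algebra_simps flip: scaleR_add_left)
  qed auto
next
  case False
  then show ?thesis using assms unfolding strictly_convex_def
    by (metis less_eq_real_def)
qed

lemma grad_ineq:
  fixes g :: "'a::real_normed_vector \<Rightarrow> real"
  assumes "strictly_convex g" "gateaux_deriv g g'"
  shows "g y + blinfun_apply (g' y) (x - y) \<le> g x"
proof -
  define \<phi> where "\<phi> t = g (y + t *\<^sub>R (x - y))" for t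
  have d: "(\<phi> has_field_derivative blinfun_apply (g' y) (x - y)) (at 0)"
    using assms(2) unfolding gateaux_deriv_def \<phi>_def by blast
  hence "((\<lambda>t. (\<phi> t - \<phi> 0) / (t - 0)) \<longlongrightarrow> blinfun_apply (g' y) (x - y)) (at 0)"
    using has_field_derivative_iff by blast
  hence lim: "((\<lambda>t. (\<phi> t - \<phi> 0) / t) \<longlongrightarrow> blinfun_apply (g' y) (x - y)) (at_right 0)"
    by (simp add: filterlim_at_split)
  have ev: "eventually (\<lambda>t. (\<phi> t - \<phi> 0) / t \<le> g x - g y) (at_right 0)"
  proof -
    have "eventually (\<lambda>t::real. 0 < t \<and> t < 1) (at_right 0)"
      unfolding eventually_at_right[OF zero_less_one] by (intro exI[of _ 1]) auto
    then show ?thesis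
    proof (rule eventually_mono)
      fix t :: real assume t: "0 < t \<and> t < 1"
      have "y + t *\<^sub>R (x - y) = t *\<^sub>R x + (1 - t) *\<^sub>R y" by (simp add: algebra_simps)
      hence "\<phi> t \<le> t * g x + (1 - t) * g y"
        unfolding \<phi>_def using sc_conv[OF assms(1), of t x y] t by simp
      hence "\<phi> t - \<phi> 0 \<le> t * (g x - g y)" by (simp add: \<phi>_def algebra_simps)
      thus "(\<phi> t - \<phi> 0) / t \<le> g x - g y" using t by (simp add: divide_le_eq mult.commute)
    qed
  qed
  have "blinfun_apply (g' y) (x - y) \<le> g x - g y"
    using tendsto_upperbound[OF lim ev] by simp
  thus ?thesis by simp
qed

lemma Dg_nonneg:
  assumes "strictly_convex g" "gateaux_deriv g g'"
  shows "0 \<le> Dg g g' x y"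
  using grad_ineq[OF assms, of y x] unfolding Dg_def by simp

lemma Dg_upper:
  assumes "strictly_convex g" "gateaux_deriv g g'"
  shows "Dg g g' x y \<le> norm (g' x - g' y) * norm (x - y)"
proof -
  have "g x + blinfun_apply (g' x) (y - x) \<le> g y" by (rule grad_ineq[OF assms])
  hence "Dg g g' x y \<le> blinfun_apply (g' x - g' y) (x - y)"
    unfolding Dg_def by (simp add: blinfun.diff_left blinfun.diff_right)
  also have "\<dots> \<le> norm (g' x - g' y) * norm (x - y)"
    using norm_blinfun[of "g' x - g' y" "x - y"] abs_le_iff by (simp add: real_norm_def)
  finally show ?thesis .
qed

lemma consist_c:
  fixes g :: "'a::real_normed_vector \<Rightarrow> real"
  assumes sc: "strictly_convex g" and h2: "H2 g g'" and B: "bounded B" and t: "0 < t"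
  shows "\<exists>c>0. \<forall>x\<in>B. \<forall>y. t \<le> norm (y - x) \<longrightarrow> c \<le> Dg g g' y x"
proof -
  have "0 < (INF x \<in> B. vg g g' x t)" using h2 B t unfolding H2_def by blast
  then obtain c where c0: "0 < ereal c" and cI: "ereal c < (INF x \<in> B. vg g g' x t)"
    using ereal_dense2 by blast
  have "c \<le> Dg g g' y x" if xB: "x \<in> B" and ty: "t \<le> norm (y - x)" for x y
  proof -
    define s where "s = norm (y - x)"
    have s0: "0 < s" using t ty s_def by linarith
    define u where "u = (t / s) *\<^sub>R y + (1 - t / s) *\<^sub>R x"
    have ux: "u - x = (t / s) *\<^sub>R (y - x)" unfolding u_def by (simp add: algebra_simps)
    have nu: "norm (u - x) = t" using ux s0 t unfolding s_def by simp
    have "ereal c < vg g g' x t"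
      using cI INF_lower[OF xB, of "\<lambda>x. vg g g' x t"] by simp
    also have "vg g g' x t \<le> ereal (Dg g g' u x)"
      unfolding vg_def using nu by (intro INF_lower) simp
    finally have cu: "c < Dg g g' u x" by simp
    have l01: "0 \<le> t / s" "t / s \<le> 1" using t s0 ty s_def by auto
    have "g u \<le> (t / s) * g y + (1 - t / s) * g x"
      unfolding u_def by (rule sc_conv[OF sc l01])
    moreover have "blinfun_apply (g' x) (u - x) = (t/s) * blinfun_apply (g' x) (y - x)"
      using ux by (simp add: blinfun.scaleR_right)
    ultimately have "Dg g g' u x \<le> (t / s) * Dg g g' y x"
      unfolding Dg_def by (simp add: algebra_simps)
    hence "c < (t / s) * Dg g g' y x" using cu by simp
    moreover have "(t / s) * Dg g g' y x \<le> Dg g g' y x"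
    proof -
      have "0 < (t/s) * Dg g g' y x" using \<open>c < (t / s) * Dg g g' y x\<close> c0 by simp
      moreover have "0 < t / s" using t s0 by simp
      ultimately have "0 < Dg g g' y x" using zero_less_mult_pos by blast
      thus ?thesis using l01 mult_left_le_one_le[of "Dg g g' y x" "t/s"] by linarith
    qed
    ultimately show ?thesis by simp
  qed
  thus ?thesis using c0 by auto
qed

lemma consist:
  fixes g :: "'a::real_normed_vector \<Rightarrow> real"
  assumes sc: "strictly_convex g" and h2: "H2 g g'" and B: "bounded (range b)"
    and D: "(\<lambda>k. Dg g g' (a k) (b k)) \<longlonglongrightarrow> 0"
  shows "(\<lambda>k. norm (a k - b k)) \<longlonglongrightarrow> 0"
proof (rule LIMSEQ_I)
  fix r :: real assume r: "0 < r"
  obtain c where c: "c > 0" "\<forall>x\<in>range b. \<forall>y. r \<le> norm (y - x) \<longrightarrow> c \<le> Dg g g' y x"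
    using consist_c[OF sc h2 B r] by blast
  obtain N where N: "\<forall>n\<ge>N. norm (Dg g g' (a n) (b n) - 0) < c" using LIMSEQ_D[OF D c(1)] by blast
  show "\<exists>no. \<forall>n\<ge>no. norm (norm (a n - b n) - 0) < r"
  proof -
   have "\<forall>n\<ge>N. norm (norm (a n - b n) - 0) < r"
   proof (intro allI impI)
    fix n assume "N \<le> n"
    hence "Dg g g' (a n) (b n) < c" using N by auto
    moreover have "r \<le> norm (a n - b n) \<Longrightarrow> c \<le> Dg g g' (a n) (b n)" using c(2) by blast
    ultimately have "\<not> r \<le> norm (a n - b n)" by linarith
    thus "norm (norm (a n - b n) - 0) < r" by simp
   qed
   thus ?thesis by blast
  qed
qed

lemma gbound:
  fixes g' :: "'a::real_normed_vector \<Rightarrow> ('a \<Rightarrow>\<^sub>L real)"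
  assumes h3: "H3 g'" and S: "bounded S"
  shows "\<exists>M. \<forall>x\<in>S. norm (g' x) \<le> M"
proof -
  obtain R where R: "R > 0" "\<forall>x\<in>S. norm x \<le> R"
    using S unfolding bounded_pos by blast
  have "uniformly_continuous_on (cball 0 R) g'" using h3 unfolding H3_def by simp
  then obtain d where d: "d > 0" "\<forall>x\<in>cball 0 R. \<forall>x'\<in>cball 0 R. dist x' x < d \<longrightarrow> dist (g' x') (g' x) < 1"
    unfolding uniformly_continuous_on_def using zero_less_one by blast
  obtain N :: nat where N: "R / d < N" using reals_Archimedean2 by blast
  have "0 < R / d" using R d by simp
  hence Npos: "0 < real N" using N by linarith
  have "R < real N * d" using N d pos_divide_less_eq[of d R "real N"] by simp
  hence RNd: "R / N < d" using Npos pos_divide_less_eq[of "real N" R d] by (simp add: mult.commute)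
  have step: "norm (g' x) \<le> norm (g' 0) + N" if x: "x \<in> cball 0 R" for x
  proof -
    have "\<forall>j\<le>N. norm (g' ((real j / N) *\<^sub>R x) - g' 0) \<le> j"
    proof (intro allI impI)
      fix j assume "j \<le> N"
      then show "norm (g' ((real j / N) *\<^sub>R x) - g' 0) \<le> j"
      proof (induction j)
        case 0 then show ?case by simp
      next
        case (Suc j)
        let ?p = "(real j / N) *\<^sub>R x" and ?q = "(real (Suc j) / N) *\<^sub>R x"
        have nx: "norm x \<le> R" using x by simp
        have fr: "real j / N \<le> 1" "0 \<le> real j / N" "real (Suc j) / N \<le> 1" "0 \<le> real (Suc j) / N"
          using Suc.prems Npos by (auto simp del: of_nat_Suc)
        have "norm ?p = (real j / N) * norm x" by simp
        also have "\<dots> \<le> norm x" using fr mult_left_le_one_le[of "norm x" "real j / N"] by simp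
        finally have pin: "?p \<in> cball 0 R" using nx by simp
        have "norm ?q = (real (Suc j) / N) * norm x" by (simp only: norm_scaleR) simp
        also have "\<dots> \<le> norm x" using fr mult_left_le_one_le[of "norm x" "real (Suc j) / N"] by simp
        finally have qin: "?q \<in> cball 0 R" using nx by simp
        have e1: "real (Suc j) / N - real j / N = 1 / N" by (simp add: diff_divide_distrib[symmetric])
        have "?q - ?p = (real (Suc j) / N - real j / N) *\<^sub>R x" by (simp only: scaleR_diff_left)
        hence "?q - ?p = (1 / N) *\<^sub>R x" by (simp only: e1)
        hence "dist ?q ?p = norm x / N" using Npos by (simp add: dist_norm)
        also have "\<dots> \<le> R / N" using divide_right_mono[OF nx] Npos by simp
        also have "\<dots> < d" using RNd .
        finally have "dist (g' ?q) (g' ?p) < 1" using d(2) pin qin by blast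
        hence "norm (g' ?q - g' ?p) < 1" by (simp add: dist_norm)
        moreover have "norm (g' ?p - g' 0) \<le> j" using Suc by simp
        ultimately have "norm (g' ?q - g' 0) \<le> 1 + j"
          using norm_triangle_ineq[of "g' ?q - g' ?p" "g' ?p - g' 0"] by simp
        thus ?case by simp
      qed
    qed
    hence "norm (g' ((real N / N) *\<^sub>R x) - g' 0) \<le> N" by blast
    hence "norm (g' x - g' 0) \<le> N" using Npos by simp
    thus ?thesis using norm_triangle_ineq2[of "g' x" "g' 0"] by simp
  qed
  have "\<forall>x\<in>S. norm (g' x) \<le> norm (g' 0) + N"
  proof
    fix x assume "x \<in> S"
    hence "x \<in> cball 0 R" using R(2) by simp
    thus "norm (g' x) \<le> norm (g' 0) + N" by (rule step)
  qed
  thus ?thesis by (rule exI)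
qed


lemma bl_le: "blinfun_apply F u \<le> norm F * norm (u::'a::real_normed_vector)"
  using norm_blinfun[of F u] abs_le_iff by (simp add: real_norm_def)

lemma bl_neg: "blinfun_apply (A - B) u = - blinfun_apply (B - A) u"
  by (simp add: blinfun.diff_left)

lemma three_point:
  "Dg g g' z a = Dg g g' z b + Dg g g' b a + blinfun_apply (g' b - g' a) (z - b)"
  unfolding Dg_def by (simp add: blinfun.diff_left blinfun.diff_right algebra_simps)

theorem lemma3p9:
  fixes K :: "'a::banach set" and C :: "'b::banach set"
    and f :: "'a \<Rightarrow> 'a \<Rightarrow> 'b" and T :: "'a \<Rightarrow> 'a set"
    and g :: "'a \<Rightarrow> real" and g' :: "'a \<Rightarrow> ('a \<Rightarrow>\<^sub>L real)"
    and \<delta> \<theta> \<beta>lo \<beta>hi \<epsilon> :: real and \<beta> \<gamma> \<alpha> :: "nat \<Rightarrow> real"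
    and e :: "nat \<Rightarrow> 'b" and eb :: 'b
    and v x z y w :: "nat \<Rightarrow> 'a" and l :: "nat \<Rightarrow> nat"
  assumes K: "K \<noteq> {}" "closed K" "convex K"
    and C: "good_cone C"
    and T: "\<forall>u \<in> K. T u \<subseteq> K"
    and gF: "in_F g g'" and "H1 g g'" and "H2 g g'" and "H3 g'" and "H4 g"
    and "B1 f" and "B2 f" and "B3 C f" and "B4 g g' K T"
    \<comment> \<open>parameters of Algorithm SEML\<close>
    and v0: "v 0 \<in> K"
    and \<delta>: "0 < \<delta>" "\<delta> < 1" and \<theta>: "0 < \<theta>" "\<theta> < 1"
    and \<beta>b: "0 < \<beta>lo" "\<beta>lo \<le> \<beta>hi" "\<forall>k. \<beta>lo \<le> \<beta> k \<and> \<beta> k \<le> \<beta>hi"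
    and \<epsilon>: "0 < \<epsilon>" "\<epsilon> \<le> 1" and \<gamma>: "\<forall>k. \<epsilon> \<le> \<gamma> k \<and> \<gamma> k \<le> 1"
    and e: "\<forall>k. e k \<in> interior C" "e \<longlonglongrightarrow> eb" "eb \<in> interior C"
    \<comment> \<open>iteration of Algorithm SEML (never stopping)\<close>
    and xk: "\<forall>k. is_bproj g g' (T (v k)) (v k) (x k)"
    and zk: "\<forall>k. wargmin C (\<lambda>u. \<beta> k *\<^sub>R f (x k) u + g u *\<^sub>R e k
                               - blinfun_apply (g' (x k)) u *\<^sub>R e k) (T (v k)) (z k)"
    and nostop: "\<forall>k. z k \<noteq> v k"
    and lk: "\<forall>k. let P = (\<lambda>m. let ym = \<theta> ^ m *\<^sub>R z k + (1 - \<theta> ^ m) *\<^sub>R x k in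
                   - (\<beta> k *\<^sub>R f ym (x k)) + \<beta> k *\<^sub>R f ym (z k)
                   + (\<delta> * Dg g g' (z k) (x k)) *\<^sub>R e k \<notin> interior C)
               in P (l k) \<and> (\<forall>m < l k. \<not> P m)"
    and \<alpha>k: "\<forall>k. \<alpha> k = \<theta> ^ l k"
    and yk: "\<forall>k. y k = \<alpha> k *\<^sub>R z k + (1 - \<alpha> k) *\<^sub>R x k"
    and wk: "\<forall>k. is_bproj g g' (K \<inter> (\<Inter>j \<in> {..k}. {u. f (y j) u \<in> uminus ` C})) (x k) (w k)"
    and vk: "\<forall>k. is_bproj g g'
               ({u. blinfun_apply (g' (x k) - g' (w k)) (u - x k) \<le> - \<gamma> k * Dg g g' (x k) (w k)}
                \<inter> {u. blinfun_apply (g' (v k) - g' (x k)) (u - v k) \<le> - \<gamma> k * Dg g g' (v k) (x k)}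
                \<inter> {u. blinfun_apply (g' (v 0) - g' (v k)) (u - v k) \<le> 0})
               (v 0) (v (Suc k))"
    and bdd: "bounded (range x)" "bounded (range v)" "bounded (range w)"
  shows "(\<lambda>k. norm (v (Suc k) - v k)) \<longlonglongrightarrow> 0
       \<and> (\<lambda>k. norm (v k - x k)) \<longlonglongrightarrow> 0
       \<and> (\<lambda>k. norm (x k - w k)) \<longlonglongrightarrow> 0"
proof -
  have sc: "strictly_convex g" and gd: "gateaux_deriv g g'" using gF unfolding in_F_def by auto
  have h2: "H2 g g'" and h3: "H3 g'" using \<open>H2 g g'\<close> \<open>H3 g'\<close> by auto
  have Dnn: "\<And>p q. 0 \<le> Dg g g' p q" using Dg_nonneg[OF sc gd] .
  define S where "S = range x \<union> range v \<union> range w"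
  have bS: "bounded S" unfolding S_def using bdd by simp
  obtain M where M: "\<forall>p\<in>S. norm (g' p) \<le> M" using gbound[OF h3 bS] by blast
  have M2: "norm (g' p - g' q) \<le> 2 * M" if "p \<in> S" "q \<in> S" for p q
  proof -
    have "norm (g' p) \<le> M" "norm (g' q) \<le> M" using M that by auto
    thus ?thesis using norm_triangle_ineq4[of "g' p" "g' q"] by linarith
  qed
  have inS: "x k \<in> S" "v k \<in> S" "w k \<in> S" for k unfolding S_def by auto
  have M0: "0 \<le> M"
  proof -
    have "norm (g' (x 0)) \<le> M" using M inS by blast
    thus ?thesis using norm_ge_zero[of "g' (x 0)"] by linarith
  qed
  have mem: "blinfun_apply (g' (x k) - g' (w k)) (v (Suc k) - x k) \<le> - \<gamma> k * Dg g g' (x k) (w k)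
       \<and> blinfun_apply (g' (v k) - g' (x k)) (v (Suc k) - v k) \<le> - \<gamma> k * Dg g g' (v k) (x k)
       \<and> blinfun_apply (g' (v 0) - g' (v k)) (v (Suc k) - v k) \<le> 0" for k
  proof -
    have "is_bproj g g'
               ({u. blinfun_apply (g' (x k) - g' (w k)) (u - x k) \<le> - \<gamma> k * Dg g g' (x k) (w k)}
                \<inter> {u. blinfun_apply (g' (v k) - g' (x k)) (u - v k) \<le> - \<gamma> k * Dg g g' (v k) (x k)}
                \<inter> {u. blinfun_apply (g' (v 0) - g' (v k)) (u - v k) \<le> 0})
               (v 0) (v (Suc k))" using vk by (rule spec)
    hence "v (Suc k) \<in> {u. blinfun_apply (g' (x k) - g' (w k)) (u - x k) \<le> - \<gamma> k * Dg g g' (x k) (w k)}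
                \<inter> {u. blinfun_apply (g' (v k) - g' (x k)) (u - v k) \<le> - \<gamma> k * Dg g g' (v k) (x k)}
                \<inter> {u. blinfun_apply (g' (v 0) - g' (v k)) (u - v k) \<le> 0}"
      unfolding is_bproj_def by (rule conjunct1)
    thus ?thesis by (simp only: Int_iff mem_Collect_eq)
  qed
  obtain Bv where Bv: "\<forall>k. norm (v k) \<le> Bv" using bdd(2) unfolding bounded_iff by blast
  define X where "X k = Dg g g' (v k) (v 0)" for k
  have tp: "X (Suc k) \<ge> X k + Dg g g' (v (Suc k)) (v k)" for k
  proof -
    have "0 \<le> blinfun_apply (g' (v k) - g' (v 0)) (v (Suc k) - v k)"
      using mem[of k] bl_neg[of "g' (v k)" "g' (v 0)"] by simp
    thus ?thesis unfolding X_def using three_point[of g g' "v (Suc k)" "v 0" "v k"] by simp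
  qed
  have inc: "incseq X"
  proof (rule incseq_SucI)
    fix k
    have "X k + Dg g g' (v (Suc k)) (v k) \<le> X (Suc k)" "0 \<le> Dg g g' (v (Suc k)) (v k)" using tp Dnn by auto
    thus "X k \<le> X (Suc k)" by linarith
  qed
  have Xb: "X k \<le> 2 * M * (2 * Bv)" for k
  proof -
    have "X k \<le> norm (g' (v k) - g' (v 0)) * norm (v k - v 0)"
      unfolding X_def by (rule Dg_upper[OF sc gd])
    also have "\<dots> \<le> 2 * M * (2 * Bv)"
    proof (rule mult_mono)
      show "norm (g' (v k) - g' (v 0)) \<le> 2 * M" using M2 inS by blast
      have "norm (v k) \<le> Bv" "norm (v 0) \<le> Bv" using Bv by auto
      thus "norm (v k - v 0) \<le> 2 * Bv" using norm_triangle_ineq4[of "v k" "v 0"] by linarith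
    qed (use M0 in auto)
    finally show ?thesis .
  qed
  obtain L where L: "X \<longlonglongrightarrow> L" using incseq_convergent[OF inc] Xb by blast
  have "(\<lambda>k. X (Suc k) - X k) \<longlonglongrightarrow> L - L"
    using L LIMSEQ_Suc[OF L] by (intro tendsto_diff)
  hence lim0: "(\<lambda>k. X (Suc k) - X k) \<longlonglongrightarrow> 0" by simp
  have "(\<lambda>k. Dg g g' (v (Suc k)) (v k)) \<longlonglongrightarrow> 0"
  proof (rule tendsto_sandwich[of "\<lambda>_. 0" _ sequentially "\<lambda>k. X (Suc k) - X k"])
    show "\<forall>\<^sub>F k in sequentially. 0 \<le> Dg g g' (v (Suc k)) (v k)" using Dnn by simp
    show "\<forall>\<^sub>F k in sequentially. Dg g g' (v (Suc k)) (v k) \<le> X (Suc k) - X k"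
    proof (intro always_eventually allI)
      fix k show "Dg g g' (v (Suc k)) (v k) \<le> X (Suc k) - X k" using tp[of k] by linarith
    qed
  qed (use lim0 in auto)
  hence n1: "(\<lambda>k. norm (v (Suc k) - v k)) \<longlonglongrightarrow> 0"
    using consist[OF sc h2 bdd(2), of "\<lambda>k. v (Suc k)"] by simp
  have b2: "Dg g g' (v k) (x k) \<le> (2 * M / \<epsilon>) * norm (v (Suc k) - v k)" for k
  proof -
    have "\<epsilon> * Dg g g' (v k) (x k) \<le> \<gamma> k * Dg g g' (v k) (x k)"
      using \<gamma> Dnn by (simp add: mult_right_mono)
    also have "\<dots> \<le> blinfun_apply (g' (x k) - g' (v k)) (v (Suc k) - v k)"
      using mem[of k] bl_neg[of "g' (v k)" "g' (x k)"] by simp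
    also have "\<dots> \<le> norm (g' (x k) - g' (v k)) * norm (v (Suc k) - v k)" by (rule bl_le)
    also have "\<dots> \<le> 2 * M * norm (v (Suc k) - v k)"
      using M2 inS by (intro mult_right_mono) auto
    finally have "Dg g g' (v k) (x k) * \<epsilon> \<le> 2 * M * norm (v (Suc k) - v k)" by (simp add: mult.commute)
    hence "Dg g g' (v k) (x k) \<le> (2 * M * norm (v (Suc k) - v k)) / \<epsilon>" using \<epsilon> by (simp add: pos_le_divide_eq)
    thus ?thesis by (simp only: times_divide_eq_left)
  qed
  have "(\<lambda>k. Dg g g' (v k) (x k)) \<longlonglongrightarrow> 0"
    by (rule tendsto_sandwich[of "\<lambda>_. 0" _ _ "\<lambda>k. (2 * M / \<epsilon>) * norm (v (Suc k) - v k)"])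
       (use Dnn b2 tendsto_mult_right_zero[OF n1, of "2 * M / \<epsilon>"] in \<open>auto intro!: always_eventually\<close>)
  hence n2: "(\<lambda>k. norm (v k - x k)) \<longlonglongrightarrow> 0"
    by (rule consist[OF sc h2 bdd(1), of v])
  have b3: "Dg g g' (x k) (w k) \<le> (2 * M / \<epsilon>) * (norm (v (Suc k) - v k) + norm (v k - x k))" for k
  proof -
    have "\<epsilon> * Dg g g' (x k) (w k) \<le> \<gamma> k * Dg g g' (x k) (w k)"
      using \<gamma> Dnn by (simp add: mult_right_mono)
    also have "\<dots> \<le> blinfun_apply (g' (w k) - g' (x k)) (v (Suc k) - x k)"
      using mem[of k] bl_neg[of "g' (x k)" "g' (w k)"] by simp
    also have "\<dots> \<le> norm (g' (w k) - g' (x k)) * norm (v (Suc k) - x k)" by (rule bl_le)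
    also have "\<dots> \<le> 2 * M * (norm (v (Suc k) - v k) + norm (v k - x k))"
    proof (rule mult_mono)
      show "norm (g' (w k) - g' (x k)) \<le> 2 * M" using M2 inS by blast
      have "v (Suc k) - x k = (v (Suc k) - v k) + (v k - x k)" by simp
      thus "norm (v (Suc k) - x k) \<le> norm (v (Suc k) - v k) + norm (v k - x k)"
        using norm_triangle_ineq[of "v (Suc k) - v k" "v k - x k"] by metis
    qed (use M0 in auto)
    finally have "Dg g g' (x k) (w k) * \<epsilon> \<le> 2 * M * (norm (v (Suc k) - v k) + norm (v k - x k))" by (simp add: mult.commute)
    hence "Dg g g' (x k) (w k) \<le> (2 * M * (norm (v (Suc k) - v k) + norm (v k - x k))) / \<epsilon>" using \<epsilon> by (simp add: pos_le_divide_eq)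
    thus ?thesis by (simp only: times_divide_eq_left)
  qed
  have "(\<lambda>k. Dg g g' (x k) (w k)) \<longlonglongrightarrow> 0"
  proof (rule tendsto_sandwich[of "\<lambda>_. 0" _ sequentially "\<lambda>k. (2 * M / \<epsilon>) * (norm (v (Suc k) - v k) + norm (v k - x k))"])
    show "\<forall>\<^sub>F k in sequentially. 0 \<le> Dg g g' (x k) (w k)" using Dnn by simp
    show "\<forall>\<^sub>F k in sequentially. Dg g g' (x k) (w k) \<le> (2 * M / \<epsilon>) * (norm (v (Suc k) - v k) + norm (v k - x k))"
      using b3 by (intro always_eventually allI)
    show "(\<lambda>k. (2 * M / \<epsilon>) * (norm (v (Suc k) - v k) + norm (v k - x k))) \<longlonglongrightarrow> 0"
      using tendsto_mult_right_zero[OF tendsto_add_zero[OF n1 n2], of "2 * M / \<epsilon>"] .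
  qed simp
  hence n3: "(\<lambda>k. norm (x k - w k)) \<longlonglongrightarrow> 0"
    by (rule consist[OF sc h2 bdd(3), of x])
  show ?thesis by (rule conjI[OF n1 conjI[OF n2 n3]])
qed

end
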